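(* Let $(t_1,h_1),(t_2,h_2)\in\mathbb R\times\mathbb R^+$ with $t_2\le t_1$, and suppose the curves $t\mapsto((t-t_1)^2+h_1^2)^{1/2}$ and $t\mapsto((t-t_2)^2+h_2^2)^{1/2}$ intersect at $(0,\hat h_0)$, $\hat h_0>0$. For $t\ge0$ let $\hat h_t=((t-t_1)^2+h_1^2)^{1/2}$ and $U^s_r=\{(x,y):y>0,(x-s)^2+y^2<r^2\}$. Then the collection of sets $\{U^t_{\hat h_t}\setminus U^0_{\hat h_0}\}_{t\ge0}$ is increasing in $t$. *)

theory Defs
  imports Complex_Main
begin

definition halfdisc :: "real \<Rightarrow> real \<Rightarrow> (real \<times> real) set" where
  "halfdisc s r = {(x, y). y > 0 \<and> (x - s)^2 + y^2 < r^2}"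

end

theory Submission
  imports Defs
begin

theorem lemma5p13:
  fixes t1 h1 t2 h2 h0 :: real
  assumes "h1 > 0" and "h2 > 0" and "t2 \<le> t1"
    and "h0 > 0"
    and "sqrt ((0 - t1)^2 + h1^2) = h0"
    and "sqrt ((0 - t2)^2 + h2^2) = h0"
  shows "\<forall>s t. 0 \<le> s \<and> s \<le> t \<longrightarrow>
           halfdisc s (sqrt ((s - t1)^2 + h1^2)) - halfdisc 0 h0
             \<subseteq> halfdisc t (sqrt ((t - t1)^2 + h1^2)) - halfdisc 0 h0"
proof (intro allI impI subsetI)
  fix s t :: real and p
  assume st: "0 \<le> s \<and> s \<le> t"
    and p: "p \<in> halfdisc s (sqrt ((s - t1)^2 + h1^2)) - halfdisc 0 h0"
  obtain x y where pxy: "p = (x, y)" by (cases p)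
  have h0sq: "h0^2 = t1^2 + h1^2"
    using assms(5) by (metis add_nonneg_nonneg real_sqrt_pow2 zero_le_power2 diff_0 power2_minus)
  have sq: "\<And>u. (sqrt ((u - t1)^2 + h1^2))^2 = (u - t1)^2 + h1^2"
    by simp
  from p have y: "y > 0" and A: "(x - s)^2 + y^2 < (s - t1)^2 + h1^2"
    and B: "\<not> (x^2 + y^2 < h0^2)"
    by (auto simp: halfdisc_def pxy sq)
  have C: "x^2 + y^2 - t1^2 - h1^2 < 2*s*(x - t1)"
    using A by (simp add: power2_eq_square algebra_simps)
  have D: "0 \<le> x^2 + y^2 - t1^2 - h1^2" using B h0sq by simp
  have "0 < s * (x - t1)" using C D by linarith
  hence "x - t1 > 0" using st by (smt (verit) mult_nonneg_nonpos)
  hence "s*(x-t1) \<le> t*(x-t1)" using st by (simp add: mult_right_mono)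
  hence "(x - t)^2 + y^2 < (t - t1)^2 + h1^2"
    using C by (simp add: power2_eq_square algebra_simps)
  thus "p \<in> halfdisc t (sqrt ((t - t1)^2 + h1^2)) - halfdisc 0 h0"
    using y B by (simp add: halfdisc_def pxy sq)
qed

end
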